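(* In the RSP setting described in the context, let $b\in\mathbb{N}^+$ and let $i^*$ be the smallest integer $i\ge 0$ such that $C_{\mathrm{opt}}(G^-_{S_i})>b$ (assuming such an $i$ exists). Define $L'=b\cdot S_{i^*}$, and $U'=U$ if $i^*=0$, $U'=2S_{i^*}(b+n)$ if $i^*>0$. Then $L'\le C_{\mathrm{opt}}(G)\le U'$ and $U'/L'\in O(1+n/b)$.
   Context: RSP setting: $G=(V,E,c,r)$ is a weakly connected directed graph with $n=|V|$, $m=|E|$, $c,r:E\to\mathbb{R}_{\ge0}$, vertices $s\ne t$, bound $R\ge 0$. Paths are edge sets; $P_v$ = set of paths from $s$ to $v$; $C_G(p)=\sum_{e\in p}c(e)$, $R_G(p)=\sum_{e\in p}r(e)$; $C_{\mathrm{opt}}(G)=\min\{C_G(p):p\in P_t,\ R_G(p)\le R\}$. It is assumed that a path $p\in P_t$ with $R_G(p)\le R$ exists and that $C_{\mathrm{opt}}(G)>0$. For $S>0$, $G^-_S=(V,E,c^-_S,r)$ with $c^-_S(e)=\lfloor c(e)/S\rfloor$ (same $s,t,R$). Bounds $L,U$: sort the edges $e_1,\dots,e_m$ ascending by cost; let $j^*$ be the smallest $j$ such that some $p\in P_t$ with $R_G(p)\le R$ uses only edges from $\{e_1,\dots,e_j\}$; set $L=c(e_{j^*})$ and $U=nL$ (these satisfy $L\le C_{\mathrm{opt}}(G)\le U$). Scaling factors: $S_i=2^{-i}U/(2n)$ for $i\in\mathbb{N}_0$. *)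

theory Defs
  imports Main "HOL-Library.Sublist" Complex_Main
begin

definition graph_ok :: "'v set \<Rightarrow> 'e set \<Rightarrow> ('e \<Rightarrow> 'v) \<Rightarrow> ('e \<Rightarrow> 'v) \<Rightarrow> bool" where
  "graph_ok V E src dst \<longleftrightarrow> finite V \<and> finite E \<and> (\<forall>e\<in>E. src e \<in> V \<and> dst e \<in> V)"

definition weakly_connected :: "'v set \<Rightarrow> 'e set \<Rightarrow> ('e \<Rightarrow> 'v) \<Rightarrow> ('e \<Rightarrow> 'v) \<Rightarrow> bool" where
  "weakly_connected V E src dst \<longleftrightarrow>
     V \<noteq> {} \<and>
     (\<forall>u\<in>V. \<forall>w\<in>V. (u, w) \<in> ({(src e, dst e) | e. e \<in> E} \<union> {(dst e, src e) | e. e \<in> E})\<^sup>*)"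

text \<open>p is (the edge set of) a simple path from u to v: there is an edge list es
  whose vertex sequence u, dst(es!0), ..., dst(last es) is repetition-free and ends in v.\<close>
definition is_path :: "'e set \<Rightarrow> ('e \<Rightarrow> 'v) \<Rightarrow> ('e \<Rightarrow> 'v) \<Rightarrow> 'v \<Rightarrow> 'v \<Rightarrow> 'e set \<Rightarrow> bool" where
  "is_path E src dst u v p \<longleftrightarrow>
     (\<exists>es. set es \<subseteq> E \<and> p = set es \<and>
        (\<forall>i<length es. src (es ! i) = (u # map dst es) ! i) \<and>
        last (u # map dst es) = v \<and> distinct (u # map dst es))"

definition path_cost :: "('e \<Rightarrow> real) \<Rightarrow> 'e set \<Rightarrow> real" where
  "path_cost c p = (\<Sum>e\<in>p. c e)"

definition C_opt :: "'e set \<Rightarrow> ('e \<Rightarrow> 'v) \<Rightarrow> ('e \<Rightarrow> 'v) \<Rightarrow> ('e \<Rightarrow> real) \<Rightarrow> ('e \<Rightarrow> real)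
                     \<Rightarrow> 'v \<Rightarrow> 'v \<Rightarrow> real \<Rightarrow> real" where
  "C_opt E src dst c r s t R =
     Min {path_cost c p | p. is_path E src dst s t p \<and> path_cost r p \<le> R}"

definition cminus :: "('e \<Rightarrow> real) \<Rightarrow> real \<Rightarrow> 'e \<Rightarrow> real" where
  "cminus c S = (\<lambda>e. real_of_int \<lfloor>c e / S\<rfloor>)"

definition rsp_setting :: "'v set \<Rightarrow> 'e set \<Rightarrow> ('e \<Rightarrow> 'v) \<Rightarrow> ('e \<Rightarrow> 'v) \<Rightarrow> ('e \<Rightarrow> real)
                            \<Rightarrow> ('e \<Rightarrow> real) \<Rightarrow> 'v \<Rightarrow> 'v \<Rightarrow> real \<Rightarrow> bool" where
  "rsp_setting V E src dst c r s t R \<longleftrightarrow>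
     graph_ok V E src dst \<and> weakly_connected V E src dst \<and>
     (\<forall>e\<in>E. c e \<ge> 0 \<and> r e \<ge> 0) \<and>
     s \<in> V \<and> t \<in> V \<and> s \<noteq> t \<and> R \<ge> 0 \<and>
     (\<exists>p. is_path E src dst s t p \<and> path_cost r p \<le> R) \<and>
     C_opt E src dst c r s t R > 0"

text \<open>es is the edge set sorted ascending by cost (e_1, ..., e_m = es!0, ..., es!(m-1)).\<close>
definition sorted_edges :: "'e set \<Rightarrow> ('e \<Rightarrow> real) \<Rightarrow> 'e list \<Rightarrow> bool" where
  "sorted_edges E c es \<longleftrightarrow> distinct es \<and> set es = E \<and> sorted (map c es)"

definition j_star :: "'e set \<Rightarrow> ('e \<Rightarrow> 'v) \<Rightarrow> ('e \<Rightarrow> 'v) \<Rightarrow> ('e \<Rightarrow> real) \<Rightarrow> 'v \<Rightarrow> 'v \<Rightarrow> real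
                     \<Rightarrow> 'e list \<Rightarrow> nat" where
  "j_star E src dst r s t R es =
     (LEAST j. \<exists>p. is_path E src dst s t p \<and> path_cost r p \<le> R \<and> p \<subseteq> set (take j es))"

definition bound_L :: "'e set \<Rightarrow> ('e \<Rightarrow> 'v) \<Rightarrow> ('e \<Rightarrow> 'v) \<Rightarrow> ('e \<Rightarrow> real) \<Rightarrow> ('e \<Rightarrow> real)
                       \<Rightarrow> 'v \<Rightarrow> 'v \<Rightarrow> real \<Rightarrow> 'e list \<Rightarrow> real" where
  "bound_L E src dst c r s t R es = c (es ! (j_star E src dst r s t R es - 1))"

definition bound_U :: "'v set \<Rightarrow> 'e set \<Rightarrow> ('e \<Rightarrow> 'v) \<Rightarrow> ('e \<Rightarrow> 'v) \<Rightarrow> ('e \<Rightarrow> real) \<Rightarrow> ('e \<Rightarrow> real)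
                       \<Rightarrow> 'v \<Rightarrow> 'v \<Rightarrow> real \<Rightarrow> 'e list \<Rightarrow> real" where
  "bound_U V E src dst c r s t R es = real (card V) * bound_L E src dst c r s t R es"

definition scale :: "'v set \<Rightarrow> real \<Rightarrow> nat \<Rightarrow> real" where
  "scale V U i = (1/2) ^ i * U / (2 * real (card V))"

end

theory Submission
  imports Defs
begin

definition feas where
  "feas E src dst r s t R = {p. is_path E src dst s t p \<and> path_cost r p \<le> R}"

lemma C_opt_alt: "C_opt E src dst c r s t R = Min (path_cost c ` feas E src dst r s t R)"
  unfolding C_opt_def feas_def by (simp add: setcompr_eq_image)

lemma is_path_sub: "is_path E src dst u v p \<Longrightarrow> p \<subseteq> E"
  unfolding is_path_def by auto

lemma feas_finite: "finite E \<Longrightarrow> finite (feas E src dst r s t R)"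
proof -
  assume "finite E"
  moreover have "feas E src dst r s t R \<subseteq> Pow E" unfolding feas_def by (auto dest: is_path_sub)
  ultimately show ?thesis by (simp add: finite_subset)
qed

lemma path_card:
  assumes "is_path E src dst u v p" "graph_ok V E src dst" "u \<in> V"
  shows "card p + 1 \<le> card V"
proof -
  obtain es where es: "set es \<subseteq> E" "p = set es" "distinct (u # map dst es)"
    using assms(1) unfolding is_path_def by blast
  have c1: "card p \<le> length es" unfolding es(2) by (rule card_length)
  have c2: "card (set (u # map dst es)) = length (u # map dst es)"
    using es(3) by (rule distinct_card)
  have fV: "finite V" using assms(2) unfolding graph_ok_def by blast
  have sV: "set (u # map dst es) \<subseteq> V" using es(1) assms(2,3) unfolding graph_ok_def by auto
  have c3: "card (set (u # map dst es)) \<le> card V" using fV sV by (rule card_mono)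
  have c4: "length (u # map dst es) = length es + 1" by simp
  show ?thesis using c1 c2 c3 c4 by linarith
qed

lemma opt_exists:
  assumes "rsp_setting V E src dst c r s t R"
  shows "\<exists>p\<in>feas E src dst r s t R. C_opt E src dst c' r s t R = path_cost c' p
     \<and> (\<forall>q\<in>feas E src dst r s t R. path_cost c' p \<le> path_cost c' q)"
proof -
  have fE: "finite E" using assms unfolding rsp_setting_def graph_ok_def by simp
  have fin: "finite (feas E src dst r s t R)" using fE by (rule feas_finite)
  obtain p0 where "is_path E src dst s t p0" "path_cost r p0 \<le> R"
    using assms unfolding rsp_setting_def by blast
  hence "p0 \<in> feas E src dst r s t R" unfolding feas_def by simp
  hence ne: "path_cost c' ` feas E src dst r s t R \<noteq> {}" by blast
  have fi: "finite (path_cost c' ` feas E src dst r s t R)" using fin by (rule finite_imageI)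
  have "Min (path_cost c' ` feas E src dst r s t R) \<in> path_cost c' ` feas E src dst r s t R"
    using fi ne by (rule Min_in)
  then obtain p where p: "p \<in> feas E src dst r s t R"
    "Min (path_cost c' ` feas E src dst r s t R) = path_cost c' p" by (rule imageE) simp
  have "\<forall>q\<in>feas E src dst r s t R. path_cost c' p \<le> path_cost c' q"
  proof
    fix q assume "q \<in> feas E src dst r s t R"
    hence "path_cost c' q \<in> path_cost c' ` feas E src dst r s t R" by (rule imageI)
    hence "Min (path_cost c' ` feas E src dst r s t R) \<le> path_cost c' q" using fi by (simp add: Min_le)
    thus "path_cost c' p \<le> path_cost c' q" using p(2) by simp
  qed
  moreover have "C_opt E src dst c' r s t R = path_cost c' p" using p(2) by (simp add: C_opt_alt)
  ultimately show ?thesis using p(1) by blast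
qed

lemma feas_props:
  assumes "rsp_setting V E src dst c r s t R" "p \<in> feas E src dst r s t R"
  shows "p \<subseteq> E" "card p + 1 \<le> card V"
proof -
  have "is_path E src dst s t p" using assms(2) unfolding feas_def by blast
  thus "p \<subseteq> E" by (rule is_path_sub)
  show "card p + 1 \<le> card V" using path_card[OF \<open>is_path E src dst s t p\<close>] assms(1)
    unfolding rsp_setting_def by blast
qed

lemma cm_upper:
  assumes "rsp_setting V E src dst c r s t R" "S > 0"
  shows "C_opt E src dst (cminus c S) r s t R \<le> C_opt E src dst c r s t R / S"
proof -
  obtain p where p: "p \<in> feas E src dst r s t R" "C_opt E src dst c r s t R = path_cost c p"
    using opt_exists[OF assms(1), of c] by blast
  obtain q where q: "C_opt E src dst (cminus c S) r s t R = path_cost (cminus c S) q"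
    "\<forall>q'\<in>feas E src dst r s t R. path_cost (cminus c S) q \<le> path_cost (cminus c S) q'"
    using opt_exists[OF assms(1), of "cminus c S"] by blast
  have "path_cost (cminus c S) p \<le> (\<Sum>e\<in>p. c e / S)"
    unfolding path_cost_def cminus_def by (intro sum_mono) linarith
  also have "\<dots> = path_cost c p / S" unfolding path_cost_def by (simp add: sum_divide_distrib)
  finally show ?thesis using p q by fastforce
qed

lemma cm_nonpos:
  assumes "rsp_setting V E src dst c r s t R" "S \<le> 0"
  shows "C_opt E src dst (cminus c S) r s t R \<le> 0"
proof -
  obtain p where p: "p \<in> feas E src dst r s t R"
    "C_opt E src dst (cminus c S) r s t R = path_cost (cminus c S) p"
    using opt_exists[OF assms(1), of "cminus c S"] by blast
  have pE: "p \<subseteq> E" using feas_props[OF assms(1) p(1)] by blast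
  have "\<forall>e\<in>p. cminus c S e \<le> 0"
  proof
    fix e assume "e \<in> p"
    hence "c e \<ge> 0" using pE assms(1) unfolding rsp_setting_def by blast
    hence "c e / S \<le> 0" using assms(2) by (simp add: divide_nonneg_nonpos)
    thus "cminus c S e \<le> 0" unfolding cminus_def by linarith
  qed
  hence "path_cost (cminus c S) p \<le> 0" unfolding path_cost_def by (simp add: sum_nonpos)
  thus ?thesis using p by simp
qed

lemma cm_lower:
  assumes "rsp_setting V E src dst c r s t R" "S > 0"
  shows "C_opt E src dst c r s t R / S - real (card V) \<le> C_opt E src dst (cminus c S) r s t R"
proof -
  obtain p where p: "C_opt E src dst c r s t R = path_cost c p"
    "\<forall>q'\<in>feas E src dst r s t R. path_cost c p \<le> path_cost c q'"
    using opt_exists[OF assms(1), of c] by blast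
  obtain q where q: "q \<in> feas E src dst r s t R"
    "C_opt E src dst (cminus c S) r s t R = path_cost (cminus c S) q"
    using opt_exists[OF assms(1), of "cminus c S"] by blast
  have cq: "card q + 1 \<le> card V" using feas_props[OF assms(1) q(1)] by blast
  have "(\<Sum>e\<in>q. c e / S - 1) \<le> path_cost (cminus c S) q"
    unfolding path_cost_def cminus_def by (intro sum_mono) linarith
  moreover have "(\<Sum>e\<in>q. c e / S - 1) = path_cost c q / S - real (card q)"
    unfolding path_cost_def by (simp add: sum_subtractf sum_divide_distrib)
  moreover have "path_cost c p \<le> path_cost c q" using p q by blast
  hence "path_cost c p / S \<le> path_cost c q / S" using assms(2) by (simp add: divide_right_mono)
  moreover have "real (card q) \<le> real (card V)" using cq by simp
  ultimately have "path_cost c p / S - real (card V) \<le> path_cost (cminus c S) q" by linarith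
  thus ?thesis using p(1) q(2) by simp
qed

lemma C_le_U:
  assumes rsp: "rsp_setting V E src dst c r s t R" and so: "sorted_edges E c es"
  shows "C_opt E src dst c r s t R \<le> bound_U V E src dst c r s t R es"
proof -
  define j where "j = j_star E src dst r s t R es"
  define Q where "Q = (\<lambda>j. \<exists>p. is_path E src dst s t p \<and> path_cost r p \<le> R \<and> p \<subseteq> set (take j es))"
  have Qex: "Q (length es)"
  proof -
    obtain p where "is_path E src dst s t p" "path_cost r p \<le> R" using rsp unfolding rsp_setting_def by blast
    moreover have "p \<subseteq> set es" using is_path_sub[OF \<open>is_path E src dst s t p\<close>] so
      unfolding sorted_edges_def by simp
    ultimately show ?thesis unfolding Q_def by auto
  qed
  have jdef: "j = (LEAST j. Q j)" unfolding j_def j_star_def Q_def by simp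
  have "Q j" using Qex jdef by (metis LeastI)
  then obtain p where p: "is_path E src dst s t p" "path_cost r p \<le> R" "p \<subseteq> set (take j es)"
    unfolding Q_def by blast
  have jle: "j \<le> length es" using Qex jdef by (simp add: Least_le)
  have "j \<noteq> 0"
  proof
    assume "j = 0"
    hence "p = {}" using p(3) by simp
    then obtain l where "set l = {}" "last (s # map dst l) = t" using p(1) unfolding is_path_def by blast
    thus False using rsp unfolding rsp_setting_def by simp
  qed
  define L where "L = c (es ! (j - 1))"
  have LU: "bound_U V E src dst c r s t R es = real (card V) * L"
    unfolding bound_U_def bound_L_def L_def j_def by simp
  have ceL: "c e \<le> L" if "e \<in> p" for e
  proof -
    from that p(3) obtain k where k: "k < length (take j es)" "e = take j es ! k"
      by (metis in_set_conv_nth subsetD)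
    hence "k \<le> j - 1" "j - 1 < length es" "e = es ! k" using jle \<open>j \<noteq> 0\<close> by auto
    moreover have "sorted (map c es)" using so unfolding sorted_edges_def by blast
    ultimately show ?thesis unfolding L_def
      using sorted_nth_mono[of "map c es" k "j - 1"] by auto
  qed
  have L0: "L \<ge> 0"
  proof -
    have "es ! (j - 1) \<in> E" using so jle \<open>j \<noteq> 0\<close> unfolding sorted_edges_def by auto
    thus ?thesis using rsp unfolding L_def rsp_setting_def by blast
  qed
  have pf: "p \<in> feas E src dst r s t R" using p unfolding feas_def by blast
  obtain p0 where p0: "C_opt E src dst c r s t R = path_cost c p0"
    "\<forall>q'\<in>feas E src dst r s t R. path_cost c p0 \<le> path_cost c q'"
    using opt_exists[OF rsp, of c] by blast
  have "path_cost c p \<le> real (card p) * L"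
    unfolding path_cost_def using ceL sum_bounded_above[of p c L] by auto
  also have "\<dots> \<le> real (card V) * L" using feas_props(2)[OF rsp pf] L0
    by (intro mult_right_mono) auto
  finally show ?thesis using p0 pf LU by fastforce
qed

theorem lemma8:
  "\<exists>K::real. \<forall>(V::nat set) (E::nat set) (src::nat \<Rightarrow> nat) (dst::nat \<Rightarrow> nat)
       (c::nat \<Rightarrow> real) (r::nat \<Rightarrow> real) s t (R::real) (es::nat list) (b::nat).
     rsp_setting V E src dst c r s t R \<and> sorted_edges E c es \<and> b > 0 \<and>
     (\<exists>i. C_opt E src dst (cminus c (scale V (bound_U V E src dst c r s t R es) i)) r s t R > real b)
     \<longrightarrow>
     (let n = real (card V);
          U = bound_U V E src dst c r s t R es;
          S = scale V U;
          istar = (LEAST i. C_opt E src dst (cminus c (S i)) r s t R > real b);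
          L' = real b * S istar;
          U' = (if istar = 0 then U else 2 * S istar * (real b + n))
      in L' \<le> C_opt E src dst c r s t R \<and> C_opt E src dst c r s t R \<le> U' \<and>
         U' / L' \<le> K * (1 + n / real b))"
proof (rule exI[of _ 2], intro allI impI)
  fix V E :: "nat set" and src dst :: "nat \<Rightarrow> nat" and c r :: "nat \<Rightarrow> real" and s t and R :: real
    and es :: "nat list" and b :: nat
  assume H: "rsp_setting V E src dst c r s t R \<and> sorted_edges E c es \<and> b > 0 \<and>
     (\<exists>i. C_opt E src dst (cminus c (scale V (bound_U V E src dst c r s t R es) i)) r s t R > real b)"
  define n where "n = real (card V)"
  define U where "U = bound_U V E src dst c r s t R es"
  define S where "S = scale V U"
  define P where "P = (\<lambda>i. C_opt E src dst (cminus c (S i)) r s t R > real b)"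
  define istar where "istar = (LEAST i. P i)"
  define C where "C = C_opt E src dst c r s t R"
  have rsp: "rsp_setting V E src dst c r s t R" and so: "sorted_edges E c es" and b0: "b > 0"
    using H by auto
  have ex: "\<exists>i. P i" using H unfolding P_def S_def U_def by blast
  have Pi: "P istar" unfolding istar_def using ex by (rule LeastI_ex)
  have Cpos: "C > 0" using rsp unfolding rsp_setting_def C_def by blast
  have Spos: "S istar > 0"
  proof (rule ccontr)
    assume "\<not> S istar > 0"
    hence "C_opt E src dst (cminus c (S istar)) r s t R \<le> 0" using cm_nonpos[OF rsp] by simp
    thus False using Pi unfolding P_def by simp
  qed
  have Sdef: "S i = (1/2)^i * (U / (2 * n))" for i unfolding S_def scale_def n_def by simp
  have q0: "U / (2 * n) > 0"
  proof -
    have "0 < (1/2::real)^istar * (U/(2*n))" using Spos by (simp only: Sdef)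
    thus ?thesis by (rule zero_less_mult_pos) simp
  qed
  have npos: "n > 0" using q0 unfolding n_def
    by (cases "card V = 0") auto
  have Upos: "U > 0" using q0 npos by (simp add: zero_less_divide_iff)
  have L1: "real b * S istar \<le> C"
  proof -
    have "real b < C / S istar" using Pi cm_upper[OF rsp Spos] unfolding P_def C_def by linarith
    thus ?thesis using Spos by (simp add: pos_less_divide_eq less_imp_le)
  qed
  define U' where "U' = (if istar = 0 then U else 2 * S istar * (real b + n))"
  have U1: "C \<le> U'"
  proof (cases "istar = 0")
    case True thus ?thesis unfolding U'_def C_def U_def using C_le_U[OF rsp so] by simp
  next
    case False
    then obtain k where k: "istar = Suc k" by (cases istar) auto
    have "\<not> P k" using not_less_Least[of k P] k unfolding istar_def by simp
    hence le: "C_opt E src dst (cminus c (S k)) r s t R \<le> real b" unfolding P_def by simp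
    have Sk: "S k = 2 * S istar" unfolding Sdef k by simp
    have Skpos: "S k > 0" using Sk Spos by simp
    have "C / S k - n \<le> real b" using cm_lower[OF rsp Skpos] le unfolding C_def n_def by linarith
    hence "C / S k \<le> real b + n" by simp
    hence "C \<le> (real b + n) * S k" using Skpos by (simp add: pos_divide_le_eq)
    thus ?thesis unfolding U'_def using False Sk by (simp add: algebra_simps)
  qed
  have R1: "U' / (real b * S istar) \<le> 2 * (1 + n / real b)"
  proof (cases "istar = 0")
    case True
    have x: "S istar = U / (2 * n)" unfolding True Sdef[of 0] power_0 mult_1_left by (rule refl)
    have u: "U' = U" unfolding U'_def using True by simp
    have "U' / (real b * S istar) = U / (real b * (U / (2 * n)))" unfolding u x by (rule refl)
    also have "\<dots> = (2 * n) / real b" using Upos npos b0 by (simp add: divide_simps)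
    also have "\<dots> \<le> 2 * (1 + n / real b)"
    proof -
      have "2 * n / real b = 2 * (n / real b)" by simp
      thus ?thesis by (simp add: ring_distribs)
    qed
    finally show ?thesis .
  next
    case False
    have "U' / (real b * S istar) = (2 * (real b + n) * S istar) / (real b * S istar)"
      unfolding U'_def using False by (simp add: algebra_simps)
    also have "\<dots> = 2 * (real b + n) / real b" using Spos by simp
    finally have "U' / (real b * S istar) = 2 * (real b + n) / real b" .
    also have "\<dots> = 2 * (1 + n / real b)" using b0 by (simp add: add_divide_distrib)
    finally show ?thesis by simp
  qed
  have e: "(LEAST i. C_opt E src dst (cminus c (scale V (bound_U V E src dst c r s t R es) i)) r s t R > real b) = istar"
    unfolding istar_def P_def S_def U_def by (rule refl)
  have L1': "real b * scale V (bound_U V E src dst c r s t R es) istar \<le> C_opt E src dst c r s t R"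
    using L1 unfolding S_def U_def C_def .
  have U1': "C_opt E src dst c r s t R \<le> (if istar = 0 then bound_U V E src dst c r s t R es
      else 2 * scale V (bound_U V E src dst c r s t R es) istar * (real b + real (card V)))"
    using U1 unfolding U'_def S_def U_def C_def n_def .
  have R1': "(if istar = 0 then bound_U V E src dst c r s t R es
      else 2 * scale V (bound_U V E src dst c r s t R es) istar * (real b + real (card V)))
      / (real b * scale V (bound_U V E src dst c r s t R es) istar) \<le> 2 * (1 + real (card V) / real b)"
    using R1 unfolding U'_def S_def U_def C_def n_def .
  show "let n = real (card V);
          U = bound_U V E src dst c r s t R es;
          S = scale V U;
          istar = (LEAST i. C_opt E src dst (cminus c (S i)) r s t R > real b);
          L' = real b * S istar;
          U' = (if istar = 0 then U else 2 * S istar * (real b + n))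
      in L' \<le> C_opt E src dst c r s t R \<and> C_opt E src dst c r s t R \<le> U' \<and>
         U' / L' \<le> 2 * (1 + n / real b)"
    unfolding Let_def e using L1' U1' R1' by (intro conjI)
qed

end
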